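(* Let $H$ and $U$ be Hilbert spaces, let $A\colon D(A)\subset H\to H$ generate a strongly continuous contraction semigroup $\{e^{tA}\}_{t\ge0}$ on $H$, and let $B\colon U\to H$ be bounded linear with adjoint $B^*$. Let $(a_n,b_n)$, $n\in\mathbb{N}$, be a sequence of pairwise disjoint intervals in $[0,\infty)$, let $(c_n)_{n\in\mathbb{N}}$ be a sequence of positive real numbers, and let $\alpha\in L^\infty([0,\infty),[0,1])$ be such that, for every $n\in\mathbb{N}$, the function $t\mapsto\alpha(a_n+t)$ restricted to $[0,b_n-a_n]$ is of class $\mathcal{K}(A,B,b_n-a_n,c_n)$. Assume that $\sup_{n\in\mathbb{N}}(b_n-a_n)<\infty$ and $\sum_{n=1}^\infty c_n=\infty$. Then for every $z_0\in H$, the mild solution $z(\cdot)$ of $\dot z=Az-\alpha(t)BB^*z$, $z(0)=z_0$, satisfies $\|z(t)\|_H\to0$ as $t\to\infty$.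
   Context: For $T>0$ and $c>0$, a function $\tilde\alpha\in L^\infty([0,T],[0,1])$ is said to be of class $\mathcal{K}(A,B,T,c)$ if $\int_0^T\tilde\alpha(t)\|B^*e^{tA}z_0\|_U^2\,dt\ge c\|z_0\|_H^2$ for all $z_0\in H$. The mild solution of $\dot z=Az-\alpha(t)BB^*z$, $z(0)=z_0$ is the unique $z\in C([0,\infty);H)$ with $z(t)=e^{tA}z_0-\int_0^te^{(t-s)A}\alpha(s)BB^*z(s)\,ds$ for all $t\ge0$. *)

theory Defs
  imports "HOL-Analysis.Analysis"
begin

text \<open>Strongly continuous contraction semigroup \<open>S t = e^{tA}\<close> on a (real) Hilbert space.
  The generator \<open>A\<close> enters the statement only through its semigroup.\<close>
definition contraction_semigroup :: "(real \<Rightarrow> ('h::real_normed_vector \<Rightarrow>\<^sub>L 'h)) \<Rightarrow> bool" where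
  "contraction_semigroup S \<longleftrightarrow>
     S 0 = id_blinfun \<and>
     (\<forall>t\<ge>0. \<forall>s\<ge>0. S (t + s) = S t o\<^sub>L S s) \<and>
     (\<forall>t\<ge>0. norm (S t) \<le> 1) \<and>
     (\<forall>x. continuous_on {0..} (\<lambda>t. S t x))"

definition is_adjoint :: "('u::real_inner \<Rightarrow>\<^sub>L 'h::real_inner) \<Rightarrow> ('h \<Rightarrow>\<^sub>L 'u) \<Rightarrow> bool" where
  "is_adjoint B Bs \<longleftrightarrow> (\<forall>u h. inner (B u) h = inner u (Bs h))"

text \<open>Class \<open>K(A,B,T,c)\<close>, with \<open>S t = e^{tA}\<close> and \<open>Bs = B^*\<close>.\<close>
definition classK :: "(real \<Rightarrow> ('h::real_normed_vector \<Rightarrow>\<^sub>L 'h)) \<Rightarrow> ('h \<Rightarrow>\<^sub>L 'u::real_normed_vector)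
    \<Rightarrow> real \<Rightarrow> real \<Rightarrow> (real \<Rightarrow> real) \<Rightarrow> bool" where
  "classK S Bs T c al \<longleftrightarrow>
     T > 0 \<and> c > 0 \<and>
     al \<in> borel_measurable (restrict_space lborel {0..T}) \<and>
     (\<forall>t\<in>{0..T}. 0 \<le> al t \<and> al t \<le> 1) \<and>
     (\<forall>z0. c * (norm z0)\<^sup>2 \<le> (LINT t:{0..T}|lborel. al t * (norm (Bs (S t z0)))\<^sup>2))"

definition mild_solution :: "(real \<Rightarrow> ('h::real_normed_vector \<Rightarrow>\<^sub>L 'h)) \<Rightarrow> ('u::real_normed_vector \<Rightarrow>\<^sub>L 'h)
    \<Rightarrow> ('h \<Rightarrow>\<^sub>L 'u) \<Rightarrow> (real \<Rightarrow> real) \<Rightarrow> 'h \<Rightarrow> (real \<Rightarrow> 'h) \<Rightarrow> bool" where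
  "mild_solution S B Bs \<alpha> z0 z \<longleftrightarrow>
     continuous_on {0..} z \<and>
     (\<forall>t\<ge>0. ((\<lambda>s. S (t - s) (\<alpha> s *\<^sub>R B (Bs (z s)))) has_integral (S t z0 - z t)) {0..t})"

end

theory Submission
  imports Defs
begin


lemma meas_to_lebesgue:
  fixes f :: "real \<Rightarrow> real"
  assumes "f \<in> borel_measurable (restrict_space lborel {0..})" "0 \<le> p"
  shows "f \<in> borel_measurable (lebesgue_on {p..q})"
proof -
  have fm: "f \<in> borel_measurable (restrict_space lborel {p..q})"
    using measurable_restrict_mono[OF assms(1)] assms(2) by auto
  have s: "sets lborel \<subseteq> sets (lebesgue :: real measure)"
    by (rule subsetI, rule sets_completionI_sets)
  show ?thesis
  proof (rule borel_measurable_subalgebra[OF mono_restrict_space[OF s] _ fm])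
    show "space (restrict_space lborel {p..q}) = space (lebesgue_on {p..q})"
      by (simp add: space_restrict_space)
  qed
qed

locale sys =
  fixes S :: "real \<Rightarrow> ('h::{real_inner, complete_space} \<Rightarrow>\<^sub>L 'h)"
    and B :: "'u::{real_inner, complete_space} \<Rightarrow>\<^sub>L 'h"
    and Bs :: "'h \<Rightarrow>\<^sub>L 'u"
    and \<alpha> :: "real \<Rightarrow> real"
    and z0 :: 'h and z :: "real \<Rightarrow> 'h"
  assumes sg: "contraction_semigroup S"
    and adj: "is_adjoint B Bs"
    and meas: "\<alpha> \<in> borel_measurable (restrict_space lborel {0..})"
    and ab: "\<forall>t\<ge>0. 0 \<le> \<alpha> t \<and> \<alpha> t \<le> 1"
    and mild: "mild_solution S B Bs \<alpha> z0 z"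
begin

lemma S0: "S 0 x = x" using sg unfolding contraction_semigroup_def by auto
lemma Sadd: "0 \<le> t \<Longrightarrow> 0 \<le> s \<Longrightarrow> S (t + s) x = S t (S s x)"
  using sg unfolding contraction_semigroup_def by auto
lemma Snorm: "0 \<le> t \<Longrightarrow> norm (S t x) \<le> norm x"
proof -
  assume "0 \<le> t"
  then have "norm (S t) \<le> 1" using sg unfolding contraction_semigroup_def by auto
  then show ?thesis
    by (meson dual_order.trans mult_left_le_one_le norm_blinfun norm_ge_zero)
qed
lemma Scont: "continuous_on {0..} (\<lambda>t. S t x)"
  using sg unfolding contraction_semigroup_def by auto
lemma zcont: "continuous_on {0..} z" using mild unfolding mild_solution_def by auto
lemma mildI: "0 \<le> t \<Longrightarrow> ((\<lambda>s. S (t - s) (\<alpha> s *\<^sub>R B (Bs (z s)))) has_integral (S t z0 - z t)) {0..t}"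
  using mild unfolding mild_solution_def by auto
lemma adjsq: "inner x (B (Bs x)) = (norm (Bs x))\<^sup>2"
  using adj unfolding is_adjoint_def by (metis inner_commute power2_norm_eq_inner)
lemma a0: "0 \<le> t \<Longrightarrow> 0 \<le> \<alpha> t" and a1: "0 \<le> t \<Longrightarrow> \<alpha> t \<le> 1" using ab by auto

lemma gcont: "continuous_on {0..} (\<lambda>r. Bs (z r))"
  using zcont by (auto intro!: continuous_intros)  
  
lemma int_on:
  assumes "continuous_on {p..q} h" "0 \<le> p"
  shows "(\<lambda>r. \<alpha> r * h r) integrable_on {p..q}"
proof -
  obtain M where M0: "\<forall>x\<in>{p..q}. norm (h x) \<le> M"
    using compact_imp_bounded[OF compact_continuous_image[OF assms(1) compact_Icc]]
    by (auto simp: bounded_iff)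
  then have M: "\<And>x. x \<in> {p..q} \<Longrightarrow> norm (h x) \<le> M" by auto
  have hm: "h \<in> borel_measurable (lebesgue_on {p..q})"
    by (rule continuous_imp_measurable_on_sets_lebesgue[OF assms(1)]) auto
  have am: "\<alpha> \<in> borel_measurable (lebesgue_on {p..q})"
    by (rule meas_to_lebesgue[OF meas assms(2)])
  show ?thesis
  proof (rule measurable_bounded_by_integrable_imp_integrable_real[where g="\<lambda>_. M"])
    show "(\<lambda>r. \<alpha> r * h r) \<in> borel_measurable (lebesgue_on {p..q})" using hm am by measurable
    show "(\<lambda>_. M) integrable_on {p..q}" by (rule has_integral_integrable[OF has_integral_const_real])
    show "\<bar>\<alpha> x * h x\<bar> \<le> M" if "x \<in> {p..q}" for x
    proof -
      have "0 \<le> \<alpha> x" "\<alpha> x \<le> 1" using a0 a1 that assms(2) by auto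
      then have "\<bar>\<alpha> x * h x\<bar> \<le> \<bar>h x\<bar>" by (simp add: abs_mult mult_left_le_one_le)
      then show ?thesis using M[OF that] by simp
    qed
  qed auto
qed


definition F where "F t r = S (t - r) (\<alpha> r *\<^sub>R B (Bs (z r)))"

lemma shift_scalar:
  assumes "0 \<le> t" "0 \<le> h"
  shows "((\<lambda>r. inner v (F (t+h) r)) has_integral inner v (S h (z t) - z (t+h))) {t..t+h}"
proof -
  have i1: "((\<lambda>r. inner v (F (t+h) r)) has_integral inner v (S (t+h) z0 - z (t+h))) {0..t+h}"
    using has_integral_linear[OF mildI[of "t+h"] bounded_linear_inner_right[of v]] assms
    by (simp add: F_def o_def)
  have i2': "((\<lambda>r. inner v (S h (F t r))) has_integral inner v (S h (S t z0 - z t))) {0..t}"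
    using has_integral_linear[OF mildI[of t], of "\<lambda>x. inner v (S h x)"] assms
    by (simp add: F_def o_def bounded_linear_compose[OF bounded_linear_inner_right blinfun.bounded_linear_right])
  have i2: "((\<lambda>r. inner v (F (t+h) r)) has_integral inner v (S (t+h) z0 - S h (z t))) {0..t}"
  proof -
    have "inner v (S h (S t z0 - z t)) = inner v (S (t+h) z0 - S h (z t))"
      using Sadd[of h t] assms by (simp add: blinfun.diff_right add.commute)
    moreover have "inner v (S h (F t r)) = inner v (F (t+h) r)" if "r \<in> {0..t}" for r
      using Sadd[of h "t - r"] that assms by (simp add: F_def algebra_simps)
    ultimately show ?thesis using has_integral_eq[OF _ i2', of "\<lambda>r. inner v (F (t+h) r)"] by simp
  qed
  have int3: "(\<lambda>r. inner v (F (t+h) r)) integrable_on {t..t+h}"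
    by (rule integrable_on_subinterval[OF has_integral_integrable[OF i1]]) (use assms in auto)
  have "((\<lambda>r. inner v (F (t+h) r)) has_integral
        (inner v (S (t+h) z0 - S h (z t)) + integral {t..t+h} (\<lambda>r. inner v (F (t+h) r)))) {0..t+h}"
    by (rule has_integral_combine[OF _ _ i2 integrable_integral[OF int3]]) (use assms in auto)
  then have "inner v (S (t+h) z0 - S h (z t)) + integral {t..t+h} (\<lambda>r. inner v (F (t+h) r))
     = inner v (S (t+h) z0 - z (t+h))" using i1 has_integral_unique by blast
  then have "integral {t..t+h} (\<lambda>r. inner v (F (t+h) r)) = inner v (S h (z t) - z (t+h))"
    by (simp add: inner_diff_right)
  then show ?thesis using integrable_integral[OF int3] by simp
qed

lemma normF: "t - r \<ge> 0 \<Longrightarrow> r \<ge> 0 \<Longrightarrow> norm (F t r) \<le> \<alpha> r * norm (B (Bs (z r)))"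
  unfolding F_def using Snorm[of "t-r"] a0[of r]
  by (metis abs_of_nonneg blinfun.scaleR_right norm_scaleR)

lemma int_nB: "0 \<le> t \<Longrightarrow> (\<lambda>r. \<alpha> r * norm (B (Bs (z r)))) integrable_on {t..u}"
  by (rule int_on) (auto intro!: continuous_intros continuous_on_subset[OF gcont])

lemma int_g2: "0 \<le> t \<Longrightarrow> (\<lambda>r. \<alpha> r * (norm (Bs (z r)))\<^sup>2) integrable_on {t..u}"
  by (rule int_on) (auto intro!: continuous_intros continuous_on_subset[OF gcont])

lemma int_g1: "0 \<le> t \<Longrightarrow> (\<lambda>r. \<alpha> r * (norm (Bs (z r)))) integrable_on {t..u}"
  by (rule int_on) (auto intro!: continuous_intros continuous_on_subset[OF gcont])

lemma diff_bound:
  assumes "0 \<le> t" "0 \<le> h"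
  shows "norm (S h (z t) - z (t+h)) \<le> integral {t..t+h} (\<lambda>r. \<alpha> r * norm (B (Bs (z r))))"
proof -
  define I where "I = S h (z t) - z (t+h)"
  define J where "J = integral {t..t+h} (\<lambda>r. \<alpha> r * norm (B (Bs (z r))))"
  have 1: "((\<lambda>r. inner I (F (t+h) r)) has_integral (norm I)^2) {t..t+h}"
    using shift_scalar[OF assms, of I] unfolding I_def by (simp add: power2_norm_eq_inner)
  have 2: "((\<lambda>r. norm I * (\<alpha> r * norm (B (Bs (z r))))) has_integral norm I * J) {t..t+h}"
    unfolding J_def by (rule has_integral_mult_right[OF integrable_integral[OF int_nB[OF assms(1)]]])
  have J0: "0 \<le> J" unfolding J_def
    by (rule integral_nonneg[OF int_nB[OF assms(1)]]) (use a0 assms in auto)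
  have "(norm I)^2 \<le> norm I * J"
  proof (rule has_integral_le[OF 1 2])
    fix r assume r: "r \<in> {t..t+h}"
    have "inner I (F (t+h) r) \<le> norm I * norm (F (t+h) r)" by (rule norm_cauchy_schwarz)
    also have "\<dots> \<le> norm I * (\<alpha> r * norm (B (Bs (z r))))"
      by (rule mult_left_mono[OF normF]) (use r assms in auto)
    finally show "inner I (F (t+h) r) \<le> norm I * (\<alpha> r * norm (B (Bs (z r))))" .
  qed
  then have "norm I \<le> J"
    using J0 by (cases "norm I = 0") (auto simp: power2_eq_square mult_le_cancel_left_pos)
  then show ?thesis unfolding I_def J_def .
qed

lemma energy_step:
  assumes "0 \<le> t" "0 \<le> h"
  shows "(norm (z (t+h)))\<^sup>2 \<le> (norm (z t))\<^sup>2 - 2 * integral {t..t+h} (\<lambda>r. inner (z (t+h)) (F (t+h) r))"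
proof -
  define I where "I = S h (z t) - z (t+h)"
  have e: "integral {t..t+h} (\<lambda>r. inner (z (t+h)) (F (t+h) r)) = inner (z (t+h)) I"
    using shift_scalar[OF assms, of "z (t+h)"] unfolding I_def by (rule integral_unique)
  have n1: "(norm (S h (z t)))\<^sup>2 \<le> (norm (z t))\<^sup>2"
    using Snorm[OF assms(2), of "z t"] norm_ge_zero power_mono by blast
  have n2: "S h (z t) = z (t+h) + I" unfolding I_def by simp
  have n3: "(norm (z (t+h) + I))\<^sup>2 = (norm (z (t+h)))\<^sup>2 + 2 * inner (z (t+h)) I + (norm I)\<^sup>2"
  proof -
    have aux: "\<And>a b c d::real. d = (a - b - c)/2 \<Longrightarrow> a = b + 2*d + c" by simp
    show ?thesis by (rule aux[OF dot_norm[of "z (t+h)" I]])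
  qed
  have "(norm (z (t+h)))\<^sup>2 + 2 * inner (z (t+h)) I + (norm I)\<^sup>2 \<le> (norm (z t))\<^sup>2"
    using n1 unfolding n2 n3 .
  then show ?thesis using e zero_le_power2[of "norm I"] by linarith
qed

end


context sys begin

lemma Sjoint:
  assumes sf: "continuous_on D sf" and yf: "continuous_on D yf" and pos: "\<forall>p\<in>D. 0 \<le> sf p"
  shows "continuous_on D (\<lambda>p. S (sf p) (yf p))"
  unfolding continuous_on_def
proof
  fix p assume p: "p \<in> D"
  have "continuous_on D (\<lambda>q. S (sf q) (yf p))"
    by (rule continuous_on_compose2[OF Scont sf]) (use pos in auto)
  then have c1: "((\<lambda>q. S (sf q) (yf p)) \<longlongrightarrow> S (sf p) (yf p)) (at p within D)"
    using p unfolding continuous_on_def by auto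
  have "(yf \<longlongrightarrow> yf p) (at p within D)" using yf p unfolding continuous_on_def by auto
  then have "((\<lambda>q. yf q - yf p) \<longlongrightarrow> 0) (at p within D)"
    using tendsto_diff[of yf "yf p" _ "\<lambda>_. yf p" "yf p"] by simp
  then have g0: "((\<lambda>q. norm (yf q - yf p)) \<longlongrightarrow> 0) (at p within D)"
    using tendsto_norm_zero by blast
  have ev: "eventually (\<lambda>q. norm (S (sf q) (yf q - yf p)) \<le> norm (yf q - yf p)) (at p within D)"
    unfolding eventually_at_filter using pos Snorm by (auto intro!: always_eventually)
  have c2: "((\<lambda>q. S (sf q) (yf q - yf p)) \<longlongrightarrow> 0) (at p within D)"
    by (rule Lim_null_comparison[OF ev g0])
  have "((\<lambda>q. S (sf q) (yf q - yf p) + S (sf q) (yf p)) \<longlongrightarrow> 0 + S (sf p) (yf p)) (at p within D)"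
    by (rule tendsto_add[OF c2 c1])
  then show "((\<lambda>q. S (sf q) (yf q)) \<longlongrightarrow> S (sf p) (yf p)) (at p within D)"
    by (simp add: blinfun.diff_right)
qed

lemma unif:
  assumes "0 \<le> M" "0 < e"
  shows "\<exists>d>0. \<forall>r\<in>{0..M}. \<forall>\<sigma>\<in>{0..1}. \<sigma> < d \<longrightarrow>
     \<bar>inner (z (r+\<sigma>)) (S \<sigma> (B (Bs (z r)))) - (norm (Bs (z r)))\<^sup>2\<bar> < e"
proof -
  define K where "K = {0..M} \<times> {0..(1::real)}"
  define \<Phi> where "\<Phi> p = inner (z (fst p + snd p)) (S (snd p) (B (Bs (z (fst p)))))" for p
  have c1: "continuous_on K (\<lambda>p. z (fst p + snd p))"
    by (rule continuous_on_compose2[OF zcont]) (auto simp: K_def intro!: continuous_intros)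
  have c0: "continuous_on K (\<lambda>p. Bs (z (fst p)))"
    by (rule continuous_on_compose2[OF gcont]) (auto simp: K_def intro!: continuous_intros)
  have c2: "continuous_on K (\<lambda>p. S (snd p) (B (Bs (z (fst p)))))"
    by (rule Sjoint) (use c0 in \<open>auto simp: K_def intro!: continuous_intros\<close>)
  have "continuous_on K \<Phi>" unfolding \<Phi>_def by (rule continuous_on_inner[OF c1 c2])
  moreover have "compact K" unfolding K_def by (intro compact_Times compact_Icc)
  ultimately have "uniformly_continuous_on K \<Phi>" by (rule compact_uniformly_continuous)
  then obtain d where d: "d > 0" "\<And>x x'. x \<in> K \<Longrightarrow> x' \<in> K \<Longrightarrow> dist x' x < d \<Longrightarrow> dist (\<Phi> x') (\<Phi> x) < e"
    unfolding uniformly_continuous_on_def using assms(2) by metis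
  show ?thesis
  proof (intro exI[of _ d] conjI ballI impI)
    fix r \<sigma> assume r: "r \<in> {0..M}" and s: "\<sigma> \<in> {0..1}" and sd: "\<sigma> < d"
    have "dist (r, \<sigma>) (r, 0) < d" using s sd by (simp add: dist_Pair_Pair dist_real_def)
    then have "dist (\<Phi> (r, \<sigma>)) (\<Phi> (r, 0)) < e" using d(2)[of "(r,0)" "(r,\<sigma>)"] r s assms
      by (auto simp: K_def)
    moreover have "\<Phi> (r, 0) = (norm (Bs (z r)))\<^sup>2" unfolding \<Phi>_def by (simp add: S0 adjsq)
    ultimately show "\<bar>inner (z (r+\<sigma>)) (S \<sigma> (B (Bs (z r)))) - (norm (Bs (z r)))\<^sup>2\<bar> < e"
      unfolding \<Phi>_def by (simp add: dist_real_def)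
  qed (use d in auto)
qed

definition D where "D t = integral {0..t} (\<lambda>r. \<alpha> r * (norm (Bs (z r)))\<^sup>2)"
definition \<phi> where "\<phi> t = (norm (z t))\<^sup>2 + 2 * D t"

lemma D_add: "0 \<le> s \<Longrightarrow> s \<le> t \<Longrightarrow> D t = D s + integral {s..t} (\<lambda>r. \<alpha> r * (norm (Bs (z r)))\<^sup>2)"
  unfolding D_def using Henstock_Kurzweil_Integration.integral_combine[where f="\<lambda>r. \<alpha> r * (norm (Bs (z r)))\<^sup>2" and a=0 and c=s and b=t] int_g2[of 0 t] by simp

lemma D_mono: "0 \<le> s \<Longrightarrow> s \<le> t \<Longrightarrow> D s \<le> D t"
  using D_add[of s t] integral_nonneg[OF int_g2[of s t]] a0 by auto

lemma D0: "D 0 = 0" unfolding D_def by simp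

lemma step:
  assumes "0 \<le> M" "0 < e"
  shows "\<exists>d>0. \<forall>t h. 0 \<le> t \<longrightarrow> 0 < h \<longrightarrow> h < d \<longrightarrow> h \<le> 1 \<longrightarrow> t + h \<le> M \<longrightarrow>
     \<phi> (t+h) \<le> \<phi> t + 2*e*h"
proof -
  obtain d where d: "d > 0" "\<And>r \<sigma>. r\<in>{0..M} \<Longrightarrow> \<sigma>\<in>{0..1} \<Longrightarrow> \<sigma> < d \<Longrightarrow>
     \<bar>inner (z (r+\<sigma>)) (S \<sigma> (B (Bs (z r)))) - (norm (Bs (z r)))\<^sup>2\<bar> < e"
    using unif[OF assms] by metis
  show ?thesis
  proof (intro exI[of _ d] conjI allI impI)
    fix t h :: real assume t: "0 \<le> t" and h: "0 < h" "h < d" "h \<le> 1" and tM: "t + h \<le> M"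
    define G where "G = integral {t..t+h} (\<lambda>r. \<alpha> r * (norm (Bs (z r)))\<^sup>2)"
    have low: "((\<lambda>r. \<alpha> r * (norm (Bs (z r)))\<^sup>2 - e) has_integral (G - e * h)) {t..t+h}"
    proof -
      have "((\<lambda>r. e) has_integral (e * h)) {t..t+h}"
        using has_integral_const_real[of e t "t+h"] h by (simp add: mult.commute)
      then show ?thesis
        unfolding G_def by (rule has_integral_diff[OF integrable_integral[OF int_g2[OF t]]])
    qed
    have pw: "\<alpha> r * (norm (Bs (z r)))\<^sup>2 - e \<le> inner (z (t+h)) (F (t+h) r)" if r: "r \<in> {t..t+h}" for r
    proof -
      have r0: "r \<in> {0..M}" "t + h - r \<in> {0..1}" "t + h - r < d" using r t h tM by auto
      have "\<bar>inner (z (r + (t+h-r))) (S (t+h-r) (B (Bs (z r)))) - (norm (Bs (z r)))\<^sup>2\<bar> < e"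
        by (rule d(2)[OF r0])
      then have q: "(norm (Bs (z r)))\<^sup>2 - e \<le> inner (z (t+h)) (S (t+h-r) (B (Bs (z r))))" by simp
      have al: "0 \<le> \<alpha> r" "\<alpha> r \<le> 1" using a0 a1 r t by auto
      have "\<alpha> r * ((norm (Bs (z r)))\<^sup>2 - e) \<le> \<alpha> r * inner (z (t+h)) (S (t+h-r) (B (Bs (z r))))"
        by (rule mult_left_mono[OF q al(1)])
      moreover have "\<alpha> r * e \<le> e" using al assms(2) by (simp add: mult_left_le_one_le)
      moreover have "inner (z (t+h)) (F (t+h) r) = \<alpha> r * inner (z (t+h)) (S (t+h-r) (B (Bs (z r))))"
        unfolding F_def by (simp add: blinfun.scaleR_right)
      ultimately show ?thesis by (simp add: algebra_simps)
    qed
    have "G - e * h \<le> inner (z (t+h)) (S h (z t) - z (t+h))"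
      by (rule has_integral_le[OF low shift_scalar[OF t]]) (use pw h in auto)
    moreover have "integral {t..t+h} (\<lambda>r. inner (z (t+h)) (F (t+h) r)) = inner (z (t+h)) (S h (z t) - z (t+h))"
      using shift_scalar[OF t, of h "z (t+h)"] h by (simp add: integral_unique)
    ultimately have "(norm (z (t+h)))\<^sup>2 \<le> (norm (z t))\<^sup>2 - 2 * (G - e * h)"
      using energy_step[OF t, of h] h by simp
    moreover have "D (t+h) = D t + G" unfolding G_def using D_add[OF t, of "t+h"] h by simp
    ultimately show "\<phi> (t+h) \<le> \<phi> t + 2*e*h" unfolding \<phi>_def by (simp add: algebra_simps)
  qed (use d in auto)
qed


lemma phi_mono:
  assumes s0: "0 \<le> s" and st0: "s \<le> t"
  shows "\<phi> t \<le> \<phi> s"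
proof (cases "s = t")
  case True then show ?thesis by simp
next
  case False
  then have st: "s < t" using st0 by simp
  show ?thesis
  proof (rule field_le_epsilon)
    fix e :: real assume e: "0 < e"
    define e' where "e' = e / (2*(t-s))"
    have e': "0 < e'" using e st by (simp add: e'_def)
    have t0: "0 \<le> t" using s0 st by simp
    obtain d where d: "d > 0" and dd: "\<And>t' h. 0 \<le> t' \<Longrightarrow> 0 < h \<Longrightarrow> h < d \<Longrightarrow> h \<le> 1 \<Longrightarrow> t' + h \<le> t \<Longrightarrow>
       \<phi> (t'+h) \<le> \<phi> t' + 2*e'*h"
      using step[OF t0 e'] by blast
    define m where "m = min d 1"
    have md: "0 < m" using d by (simp add: m_def)
    obtain n :: nat where n: "(t - s) / m < real n" using reals_Archimedean2 by blast
    have "0 < (t - s) / m" using st md by simp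
    then have n0: "0 < real n" using n by linarith
    define h where "h = (t-s)/n"
    have h0: "0 < h" unfolding h_def using st n0 by simp
    have "t - s < real n * m" using n md by (simp add: field_simps)
    then have "h < m" unfolding h_def using n0 by (subst pos_divide_less_eq) (auto simp: mult.commute)
    then have hmd: "h < d" "h \<le> 1" unfolding m_def by auto
    have nh: "real n * h = t - s" unfolding h_def using n0 by simp
    have ind: "k \<le> n \<Longrightarrow> \<phi> (s + real k * h) \<le> \<phi> s + 2*e'*(real k * h)" for k :: nat
    proof (induction k)
      case 0 show ?case by simp
    next
      case (Suc k)
      then have IH: "\<phi> (s + real k * h) \<le> \<phi> s + 2*e'*(real k * h)" by simp
      have "real (Suc k) * h \<le> real n * h" using Suc.prems h0 by (intro mult_right_mono) auto
      then have le: "s + real k * h + h \<le> t" using nh by (simp add: algebra_simps)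
      have "0 \<le> s + real k * h" using s0 h0 by simp
      then have "\<phi> (s + real k * h + h) \<le> \<phi> (s + real k * h) + 2*e'*h"
        using dd[of "s + real k * h" h] h0 hmd le by simp
      then show ?case using IH by (simp add: algebra_simps)
    qed
    have "\<phi> (s + real n * h) \<le> \<phi> s + 2*e'*(real n * h)" by (rule ind) simp
    moreover have "2*e'*(real n * h) = e" unfolding nh e'_def using st by (simp add: field_simps)
    ultimately show "\<phi> t \<le> \<phi> s + e" using nh by simp
  qed
qed

lemma z_mono:
  assumes "0 \<le> s" "s \<le> t"
  shows "norm (z t) \<le> norm (z s)"
proof -
  have "(norm (z t))\<^sup>2 \<le> (norm (z s))\<^sup>2"
    using phi_mono[OF assms] D_mono[OF assms] unfolding \<phi>_def by linarith
  then show ?thesis by (rule power2_le_imp_le) simp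
qed

lemma D_bound: "0 \<le> t \<Longrightarrow> 2 * D t \<le> (norm (z 0))\<^sup>2"
proof -
  assume t: "0 \<le> t"
  have "\<phi> t \<le> \<phi> 0" by (rule phi_mono) (use t in auto)
  then show ?thesis using D0 zero_le_power2[of "norm (z t)"] unfolding \<phi>_def by linarith
qed

lemma D_nonneg: "0 \<le> t \<Longrightarrow> 0 \<le> D t" using D_mono[of 0 t] D0 by simp


lemma int_sub:
  assumes kc: "continuous_on {0..} k" and kp: "\<And>x. 0 \<le> x \<Longrightarrow> 0 \<le> k x"
    and pq: "0 \<le> p" "p \<le> q" "q \<le> r"
  shows "integral {p..q} (\<lambda>x. \<alpha> x * k x) \<le> integral {p..r} (\<lambda>x. \<alpha> x * k x)"
proof -
  have i1: "(\<lambda>x. \<alpha> x * k x) integrable_on {p..r}"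
    by (rule int_on[OF continuous_on_subset[OF kc]]) (use pq in auto)
  have i2: "(\<lambda>x. \<alpha> x * k x) integrable_on {q..r}"
    by (rule int_on[OF continuous_on_subset[OF kc]]) (use pq in auto)
  have "0 \<le> integral {q..r} (\<lambda>x. \<alpha> x * k x)"
    by (rule integral_nonneg[OF i2]) (use pq a0 kp in auto)
  moreover have "integral {p..q} (\<lambda>x. \<alpha> x * k x) + integral {q..r} (\<lambda>x. \<alpha> x * k x) = integral {p..r} (\<lambda>x. \<alpha> x * k x)"
    by (rule Henstock_Kurzweil_Integration.integral_combine[OF pq(2,3) i1])
  ultimately show ?thesis by linarith
qed

lemma ngcont: "continuous_on {0..} (\<lambda>r. norm (Bs (z r)))"
  using gcont by (auto intro!: continuous_intros)

lemma Bs_bound: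
  assumes a: "0 \<le> a" and tau: "0 \<le> \<tau>" "\<tau> \<le> T"
  shows "norm (Bs (S \<tau> (z a))) \<le> norm (Bs (z (a+\<tau>))) + norm Bs * norm B * integral {a..a+T} (\<lambda>r. \<alpha> r * norm (Bs (z r)))"
proof -
  define J where "J = integral {a..a+T} (\<lambda>r. \<alpha> r * norm (Bs (z r)))"
  define J' where "J' = integral {a..a+\<tau>} (\<lambda>r. \<alpha> r * norm (Bs (z r)))"
  have 1: "norm (S \<tau> (z a) - z (a+\<tau>)) \<le> integral {a..a+\<tau>} (\<lambda>r. \<alpha> r * norm (B (Bs (z r))))"
    by (rule diff_bound) (use a tau in auto)
  have h2: "((\<lambda>r. norm B * (\<alpha> r * norm (Bs (z r)))) has_integral norm B * J') {a..a+\<tau>}"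
    unfolding J'_def by (rule has_integral_mult_right[OF integrable_integral[OF int_g1[OF a]]])
  have 2: "integral {a..a+\<tau>} (\<lambda>r. \<alpha> r * norm (B (Bs (z r)))) \<le> norm B * J'"
  proof (rule has_integral_le[OF integrable_integral[OF int_nB[OF a]] h2])
    fix r assume r: "r \<in> {a..a+\<tau>}"
    have "0 \<le> \<alpha> r" using a0 r a by auto
    then have "\<alpha> r * norm (B (Bs (z r))) \<le> \<alpha> r * (norm B * norm (Bs (z r)))"
      by (rule mult_left_mono[OF norm_blinfun])
    then show "\<alpha> r * norm (B (Bs (z r))) \<le> norm B * (\<alpha> r * norm (Bs (z r)))" by (simp add: algebra_simps)
  qed
  have 3: "J' \<le> J" unfolding J'_def J_def
    by (rule int_sub[OF ngcont]) (use a tau in auto)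
  have dd: "norm (S \<tau> (z a) - z (a+\<tau>)) \<le> norm B * J"
    using 1 2 mult_left_mono[OF 3, of "norm B"] by simp
  have "Bs (S \<tau> (z a)) = Bs (z (a+\<tau>)) + Bs (S \<tau> (z a) - z (a+\<tau>))" by (simp add: blinfun.diff_right)
  then have "norm (Bs (S \<tau> (z a))) \<le> norm (Bs (z (a+\<tau>))) + norm (Bs (S \<tau> (z a) - z (a+\<tau>)))"
    by (metis norm_triangle_ineq)
  also have "norm (Bs (S \<tau> (z a) - z (a+\<tau>))) \<le> norm Bs * norm (S \<tau> (z a) - z (a+\<tau>))"
    by (rule norm_blinfun)
  also have "\<dots> \<le> norm Bs * (norm B * J)" by (rule mult_left_mono[OF dd]) simp
  finally show ?thesis unfolding J_def by (simp add: algebra_simps)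
qed

lemma am_gm: assumes l: "0 < l" shows "(x::real) \<le> l + x^2/(4*l)"
proof -
  have "(x - 2*l)^2 = x^2 - 4*l*x + 4*l*l" by (simp add: power2_eq_square algebra_simps)
  then have "4*l*x \<le> 4*l*l + x^2" using zero_le_power2[of "x - 2*l"] by linarith
  then show ?thesis using l by (simp add: field_simps)
qed

lemma J_bound:
  assumes a: "0 \<le> a" and T: "0 < T"
  shows "(integral {a..a+T} (\<lambda>r. \<alpha> r * norm (Bs (z r))))\<^sup>2 \<le> T * integral {a..a+T} (\<lambda>r. \<alpha> r * (norm (Bs (z r)))\<^sup>2)"
proof -
  define J where "J = integral {a..a+T} (\<lambda>r. \<alpha> r * norm (Bs (z r)))"
  define E where "E = integral {a..a+T} (\<lambda>r. \<alpha> r * (norm (Bs (z r)))\<^sup>2)"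
  have key: "J \<le> l*T + E * (1/(4*l))" if l: "0 < l" for l
  proof -
    have c: "((\<lambda>r. l) has_integral (l*T)) {a..a+T}"
      using has_integral_const_real[of l a "a+T"] T by (simp add: mult.commute)
    have hi: "((\<lambda>r. l + \<alpha> r * (norm (Bs (z r)))\<^sup>2 * (1/(4*l))) has_integral (l*T + E * (1/(4*l)))) {a..a+T}"
      unfolding E_def by (rule has_integral_add[OF c has_integral_mult_left[OF integrable_integral[OF int_g2[OF a]]]])
    show ?thesis unfolding J_def
    proof (rule has_integral_le[OF integrable_integral[OF int_g1[OF a]] hi])
      fix r assume r: "r \<in> {a..a+T}"
      have al: "0 \<le> \<alpha> r" "\<alpha> r \<le> 1" using a0 a1 r a by auto
      define x where "x = norm (Bs (z r))"
      have "\<alpha> r * x \<le> \<alpha> r * (l + x^2/(4*l))" by (rule mult_left_mono[OF am_gm[OF l] al(1)])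
      moreover have "\<alpha> r * l \<le> l" using al l by (simp add: mult_left_le_one_le)
      ultimately show "\<alpha> r * norm (Bs (z r)) \<le> l + \<alpha> r * (norm (Bs (z r)))\<^sup>2 * (1/(4*l))"
        unfolding x_def by (simp add: algebra_simps)
    qed
  qed
  have J0: "0 \<le> J" unfolding J_def by (rule integral_nonneg[OF int_g1[OF a]]) (use a0 a in auto)
  show ?thesis
  proof (cases "J = 0")
    case True
    have "0 \<le> E" unfolding E_def by (rule integral_nonneg[OF int_g2[OF a]]) (use a0 a in auto)
    then show ?thesis using True T unfolding J_def[symmetric] E_def[symmetric] by simp
  next
    case False
    then have Jp: "0 < J" using J0 by simp
    have "J \<le> J/(2*T)*T + E * (1/(4*(J/(2*T))))" by (rule key) (use Jp T in simp)
    moreover have "J/(2*T)*T + E * (1/(4*(J/(2*T)))) = J/2 + E*T/(2*J)" using Jp T by (simp add: field_simps)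
    ultimately have "J/2 \<le> E*T/(2*J)" by simp
    then have "J*J \<le> E*T" using Jp by (simp add: field_simps)
    then show ?thesis unfolding J_def[symmetric] E_def[symmetric] by (simp add: power2_eq_square mult.commute)
  qed
qed

lemma alg:
  fixes q1 q2 q3 q4 :: real
  assumes "0 \<le> q1" "q1 \<le> 1" "0 \<le> q2" "0 \<le> q3" "0 \<le> q4" "q2 \<le> q3 + q4"
  shows "q1 * q2^2 \<le> 2*(q1*q3^2) + 2*q4^2"
proof -
  have "q2^2 \<le> (q3+q4)^2" using assms by (intro power_mono) auto
  also have "\<dots> \<le> 2*q3^2 + 2*q4^2"
  proof -
    have "(q3+q4)^2 = q3^2 + 2*q3*q4 + q4^2" "(q3-q4)^2 = q3^2 - 2*q3*q4 + q4^2" by (simp_all add: power2_eq_square algebra_simps)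
    then show ?thesis using zero_le_power2[of "q3-q4"] by linarith
  qed
  finally have "q1 * q2^2 \<le> q1 * (2*q3^2 + 2*q4^2)" by (rule mult_left_mono) (use assms in simp)
  moreover have "q1 * q4^2 \<le> q4^2" using assms by (simp add: mult_left_le_one_le)
  ultimately show ?thesis by (simp add: algebra_simps)
qed


lemma obs:
  assumes a: "0 \<le> a" and K: "classK S Bs T c (\<lambda>\<tau>. \<alpha> (a+\<tau>))" and TT: "T \<le> Tm"
  shows "c * (norm (z a))\<^sup>2 \<le> (2 + 2*(norm Bs * norm B)\<^sup>2 * Tm\<^sup>2) * (D (a+T) - D a)"
proof -
  have T0: "0 < T" and ineq: "c*(norm (z a))\<^sup>2 \<le> (LINT \<tau>:{0..T}|lborel. \<alpha> (a+\<tau>) * (norm (Bs (S \<tau> (z a))))\<^sup>2)"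
    using K unfolding classK_def by auto
  define E where "E = integral {a..a+T} (\<lambda>r. \<alpha> r * (norm (Bs (z r)))\<^sup>2)"
  define J where "J = integral {a..a+T} (\<lambda>r. \<alpha> r * norm (Bs (z r)))"
  define \<beta> where "\<beta> = norm Bs * norm B"
  have EE: "E = D (a+T) - D a" unfolding E_def using D_add[OF a, of "a+T"] T0 by simp
  have E0: "0 \<le> E" unfolding E_def by (rule integral_nonneg[OF int_g2[OF a]]) (use a0 a in auto)
  have J0: "0 \<le> J" unfolding J_def by (rule integral_nonneg[OF int_g1[OF a]]) (use a0 a in auto)
  have Jb: "J\<^sup>2 \<le> T * E" unfolding J_def E_def by (rule J_bound[OF a T0])
  define Fn where "Fn \<tau> = \<alpha> (a+\<tau>) * (norm (Bs (S \<tau> (z a))))\<^sup>2" for \<tau>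
  have bound: "c*(norm (z a))\<^sup>2 \<le> 2*E + 2*\<beta>\<^sup>2*J\<^sup>2*T"
  proof (cases "set_integrable lborel {0..T} Fn")
    case True
    have L: "(LINT \<tau>:{0..T}|lborel. \<alpha> (a+\<tau>) * (norm (Bs (S \<tau> (z a))))\<^sup>2) = integral {0..T} Fn"
      using set_borel_integral_eq_integral(2)[OF True] unfolding Fn_def by simp
    have iF: "Fn integrable_on {0..T}" by (rule set_borel_integral_eq_integral(1)[OF True])
    have sh: "((\<lambda>\<tau>. \<alpha> (\<tau>+a) * (norm (Bs (z (\<tau>+a))))\<^sup>2) has_integral E) {0..T}"
      using has_integral_shift_real_ivl[OF integrable_integral[OF int_g2[OF a, of "a+T"]], of a]
      unfolding E_def by simp
    have c2: "((\<lambda>\<tau>. 2*\<beta>\<^sup>2*J\<^sup>2) has_integral (2*\<beta>\<^sup>2*J\<^sup>2*T)) {0..T}"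
      using has_integral_const_real[of "2*\<beta>\<^sup>2*J\<^sup>2" 0 T] T0 by (simp add: mult.commute)
    have iG: "((\<lambda>\<tau>. 2 * (\<alpha> (\<tau>+a) * (norm (Bs (z (\<tau>+a))))\<^sup>2) + 2*\<beta>\<^sup>2*J\<^sup>2) has_integral (2*E + 2*\<beta>\<^sup>2*J\<^sup>2*T)) {0..T}"
      by (rule has_integral_add[OF has_integral_mult_right[OF sh] c2])
    have "integral {0..T} Fn \<le> 2*E + 2*\<beta>\<^sup>2*J\<^sup>2*T"
    proof (rule has_integral_le[OF integrable_integral[OF iF] iG])
      fix \<tau> assume tau: "\<tau> \<in> {0..T}"
      have bb: "norm (Bs (S \<tau> (z a))) \<le> norm (Bs (z (a+\<tau>))) + \<beta> * J"
        unfolding \<beta>_def J_def by (rule Bs_bound) (use a tau in auto)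
      have "\<alpha> (a+\<tau>) * (norm (Bs (S \<tau> (z a))))\<^sup>2 \<le> 2*(\<alpha> (a+\<tau>) * (norm (Bs (z (a+\<tau>))))\<^sup>2) + 2*(\<beta> * J)\<^sup>2"
        by (rule alg[OF a0 a1 norm_ge_zero norm_ge_zero _ bb]) (use a tau J0 in \<open>auto simp: \<beta>_def\<close>)
      then show "Fn \<tau> \<le> 2 * (\<alpha> (\<tau>+a) * (norm (Bs (z (\<tau>+a))))\<^sup>2) + 2*\<beta>\<^sup>2*J\<^sup>2"
        unfolding Fn_def by (simp add: add.commute power_mult_distrib)
    qed
    then show ?thesis using ineq L by simp
  next
    case False
    then have "(LINT \<tau>:{0..T}|lborel. \<alpha> (a+\<tau>) * (norm (Bs (S \<tau> (z a))))\<^sup>2) = 0"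
      unfolding set_lebesgue_integral_def set_integrable_def Fn_def by (simp add: not_integrable_integral_eq)
    moreover have "0 \<le> 2*\<beta>\<^sup>2*J\<^sup>2*T" using T0 by simp
    ultimately show ?thesis using ineq E0 by linarith
  qed
  have "2*\<beta>\<^sup>2*J\<^sup>2*T \<le> 2*\<beta>\<^sup>2*(T*E)*T"
    using Jb T0 by (intro mult_right_mono mult_left_mono) auto
  also have "\<dots> = 2*\<beta>\<^sup>2*T\<^sup>2*E" by (simp add: power2_eq_square algebra_simps)
  also have "\<dots> \<le> 2*\<beta>\<^sup>2*Tm\<^sup>2*E"
  proof -
    have "T\<^sup>2 \<le> Tm\<^sup>2" using T0 TT by (intro power_mono) auto
    then show ?thesis using E0 by (intro mult_right_mono mult_left_mono) auto
  qed
  finally have "c*(norm (z a))\<^sup>2 \<le> 2*E + 2*\<beta>\<^sup>2*Tm\<^sup>2*E" using bound by linarith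
  then show ?thesis unfolding EE[symmetric] \<beta>_def by (simp add: algebra_simps)
qed

end

lemma disj_sum:
  fixes D :: "real \<Rightarrow> real" and a b :: "nat \<Rightarrow> real"
  assumes mono: "\<And>s t. 0 \<le> s \<Longrightarrow> s \<le> t \<Longrightarrow> D s \<le> D t"
    and disj: "\<forall>n m. n \<noteq> m \<longrightarrow> {a n<..<b n} \<inter> {a m<..<b m} = {}"
    and ab: "\<And>n. 0 \<le> a n" "\<And>n. a n < b n"
  shows "finite I \<Longrightarrow> 0 \<le> x \<Longrightarrow> (\<forall>n\<in>I. b n \<le> x) \<Longrightarrow> (\<Sum>n\<in>I. D (b n) - D (a n)) \<le> D x - D 0"
proof (induction I arbitrary: x rule: finite_psubset_induct)
  case (psubset I)
  show ?case
  proof (cases "I = {}")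
    case True
    then show ?thesis using mono[of 0 x] psubset.prems by simp
  next
    case False
    have "Max (a ` I) \<in> a ` I" using False psubset.hyps by (intro Max_in) auto
    then obtain k where k: "k \<in> I" "a k = Max (a ` I)" by auto
    have kmax: "a m \<le> a k" if "m \<in> I" for m using k that psubset.hyps by simp
    have others: "b m \<le> a k" if m: "m \<in> I - {k}" for m
    proof (rule ccontr)
      assume "\<not> b m \<le> a k"
      then have bm: "a k < b m" by simp
      define mm where "mm = min (b m) (b k)"
      define p where "p = (a k + mm) / 2"
      have amm: "a k < mm" using bm ab(2)[of k] unfolding mm_def by simp
      have "a k < p" using amm unfolding p_def by (simp add: field_simps)
      moreover have "p < mm" using amm unfolding p_def by (simp add: field_simps)
      moreover have "mm \<le> b m" "mm \<le> b k" unfolding mm_def by auto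
      moreover have "a m \<le> a k" using kmax m by simp
      ultimately have "p \<in> {a m<..<b m} \<inter> {a k<..<b k}" by auto
      moreover have "m \<noteq> k" using m by simp
      ultimately show False using disj by blast
    qed
    have IH: "(\<Sum>n\<in>I-{k}. D (b n) - D (a n)) \<le> D (a k) - D 0"
      by (rule psubset.IH) (use k(1) others ab(1)[of k] in auto)
    have "(\<Sum>n\<in>I. D (b n) - D (a n)) = (D (b k) - D (a k)) + (\<Sum>n\<in>I-{k}. D (b n) - D (a n))"
      using k(1) psubset.hyps by (simp add: sum.remove)
    also have "\<dots> \<le> D (b k) - D 0" using IH by simp
    also have "\<dots> \<le> D x - D 0" using mono[of "b k" x] ab[of k] psubset.prems k(1) by force
    finally show ?thesis .
  qed
qed

theorem theorem5p1:
  fixes S :: "real \<Rightarrow> ('h::{real_inner, complete_space} \<Rightarrow>\<^sub>L 'h)"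
    and B :: "'u::{real_inner, complete_space} \<Rightarrow>\<^sub>L 'h"
    and Bs :: "'h \<Rightarrow>\<^sub>L 'u"
    and a b c :: "nat \<Rightarrow> real"
    and \<alpha> :: "real \<Rightarrow> real"
  assumes "contraction_semigroup S"
    and "is_adjoint B Bs"
    and "\<forall>n. 0 \<le> a n"
    and "\<forall>n m. n \<noteq> m \<longrightarrow> {a n<..<b n} \<inter> {a m<..<b m} = {}"
    and "\<forall>n. c n > 0"
    and "\<alpha> \<in> borel_measurable (restrict_space lborel {0..})"
    and "\<forall>t\<ge>0. 0 \<le> \<alpha> t \<and> \<alpha> t \<le> 1"
    and "\<forall>n. classK S Bs (b n - a n) (c n) (\<lambda>t. \<alpha> (a n + t))"
    and "bdd_above (range (\<lambda>n. b n - a n))"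
    and "filterlim (\<lambda>N. \<Sum>n<N. c n) at_top sequentially"
    and "mild_solution S B Bs \<alpha> z0 z"
  shows "((\<lambda>t. norm (z t)) \<longlongrightarrow> 0) at_top"
proof -
  interpret sys S B Bs \<alpha> z0 z
    by unfold_locales (use assms(1,2,6,7,11) in auto)
  obtain Tm where Tm: "\<And>n. b n - a n \<le> Tm" using assms(9) unfolding bdd_above_def by auto
  have a0n: "\<And>n. 0 \<le> a n" using assms(3) by auto
  have abn: "\<And>n. a n < b n" using assms(8) unfolding classK_def by auto
  define \<kappa> where "\<kappa> = 2 + 2*(norm Bs * norm B)\<^sup>2 * Tm\<^sup>2"
  have \<kappa>0: "0 < \<kappa>" unfolding \<kappa>_def by (simp add: add_pos_nonneg)
  have obsn: "c n * (norm (z (a n)))\<^sup>2 \<le> \<kappa> * (D (b n) - D (a n))" for n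
    using obs[OF a0n[of n], of "b n - a n" "c n" Tm] assms(8) Tm[of n] unfolding \<kappa>_def by simp
  have small: "\<exists>t0\<ge>0. norm (z t0) < e" if e: "0 < e" for e
  proof (rule ccontr)
    assume "\<not> ?thesis"
    then have ge: "\<And>t. 0 \<le> t \<Longrightarrow> e \<le> norm (z t)" by force
    define C where "C = \<kappa> * (norm (z 0))\<^sup>2 / (2 * e\<^sup>2)"
    have bnd: "(\<Sum>n<N. c n) \<le> C" for N
    proof -
      define x where "x = (\<Sum>n<N. b n)"
      have bnn: "\<And>n. 0 \<le> b n" using a0n abn by (meson less_imp_le order_trans)
      have bx: "\<forall>n\<in>{..<N}. b n \<le> x" unfolding x_def
        by (auto intro!: member_le_sum bnn)
      have x0: "0 \<le> x" unfolding x_def by (auto intro!: sum_nonneg bnn)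
      have ds: "(\<Sum>n<N. D (b n) - D (a n)) \<le> D x - D 0"
        by (rule disj_sum[OF D_mono assms(4) a0n abn _ x0 bx]) auto
      have "c n * e\<^sup>2 \<le> \<kappa> * (D (b n) - D (a n))" for n
      proof -
        have "e\<^sup>2 \<le> (norm (z (a n)))\<^sup>2" using ge[OF a0n[of n]] e by (intro power_mono) auto
        then have "c n * e\<^sup>2 \<le> c n * (norm (z (a n)))\<^sup>2" using assms(5) by (intro mult_left_mono) (auto simp: less_imp_le)
        then show ?thesis using obsn[of n] by linarith
      qed
      then have "(\<Sum>n<N. c n * e\<^sup>2) \<le> (\<Sum>n<N. \<kappa> * (D (b n) - D (a n)))" by (rule sum_mono)
      then have "(\<Sum>n<N. c n) * e\<^sup>2 \<le> \<kappa> * (\<Sum>n<N. D (b n) - D (a n))"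
        by (simp add: sum_distrib_left sum_distrib_right)
      also have "\<dots> \<le> \<kappa> * (D x - D 0)" using ds \<kappa>0 by (intro mult_left_mono) auto
      also have "\<dots> \<le> \<kappa> * ((norm (z 0))\<^sup>2 / 2)"
        using D_bound[OF x0] D0 \<kappa>0 by (intro mult_left_mono) auto
      finally have "(\<Sum>n<N. c n) * e\<^sup>2 \<le> \<kappa> * ((norm (z 0))\<^sup>2 / 2)" .
      then show ?thesis unfolding C_def using e by (simp add: field_simps)
    qed
    have "eventually (\<lambda>N. C + 1 \<le> (\<Sum>n<N. c n)) sequentially"
      using assms(10) unfolding filterlim_at_top by blast
    then obtain N where "C + 1 \<le> (\<Sum>n<N. c n)" unfolding eventually_sequentially by blast
    then show False using bnd[of N] by simp
  qed
  show ?thesis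
  proof (rule tendstoI)
    fix e :: real assume e: "0 < e"
    obtain t0 where t0: "0 \<le> t0" "norm (z t0) < e" using small[OF e] by blast
    show "eventually (\<lambda>t. dist (norm (z t)) 0 < e) at_top"
      unfolding eventually_at_top_linorder
    proof (intro exI allI impI)
      fix t assume "t0 \<le> t"
      then have "norm (z t) \<le> norm (z t0)" using t0 by (intro z_mono) auto
      then show "dist (norm (z t)) 0 < e" using t0 by simp
    qed
  qed
qed


end
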